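(* Let $G$ be a finitely generated group and let $S$ and $S'$ be finite generating sets of $G$, each closed under inverses. Then there is a constant $K$ such that $\Delta_S(n)\le K\,\Delta_{S'}(Kn)+K$ for all $n\ge1$.
   Context: For a finite generating set $T$ of $G$ closed under inverses, $\Gamma_T$ is the Cayley diagram (edge labelled $t$ from $g$ to $gt$), with word metric $d_T(g,g')$ = length of a shortest word in $T$ representing $g^{-1}g'$. A cycle of length $n\ge1$ in $\Gamma_T$ is a sequence $g_0,\dots,g_n$ in $G$ with an edge from each $g_{i-1}$ to $g_i$ and $g_n=g_0$. A (diagonal) triangulation of a circle: distinguish one or more points on the circle and join some of them by chords such that no two chords meet in the interior, the interior is divided into triangles, and each arc between neighbouring distinguished points is a side of a triangle; circles with at most three distinguished points count as triangulated with no chords. A triangulation of the cycle $g_0,\dots,g_n$ is such a triangulation of a circle with distinguished points $p_1,\dots,p_n$ labelled $g_1,\dots,g_n$ counterclockwise; a chord from $p_i$ to $p_j$ has length $d_T(g_i,g_j)$; a $k$-triangulation has all chord lengths $\le k$. $\Delta_T(n)$ is the least $k$ such that every cycle of length at most $n$ in $\Gamma_T$ has a $k$-triangulation. *)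

theory Defs
  imports "HOL-Algebra.Group" "HOL-Algebra.Generated_Groups"
begin

definition word_prod :: "('a, 'b) monoid_scheme \<Rightarrow> 'a list \<Rightarrow> 'a" where
  "word_prod G w = foldr (\<lambda>t acc. t \<otimes>\<^bsub>G\<^esub> acc) w \<one>\<^bsub>G\<^esub>"

definition word_dist :: "('a, 'b) monoid_scheme \<Rightarrow> 'a set \<Rightarrow> 'a \<Rightarrow> 'a \<Rightarrow> nat" where
  "word_dist G T g g' =
     (LEAST n. \<exists>w. set w \<subseteq> T \<and> length w = n \<and> word_prod G w = inv\<^bsub>G\<^esub> g \<otimes>\<^bsub>G\<^esub> g')"

definition cayley_cycle :: "('a, 'b) monoid_scheme \<Rightarrow> 'a set \<Rightarrow> (nat \<Rightarrow> 'a) \<Rightarrow> nat \<Rightarrow> bool" where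
  "cayley_cycle G T g n \<longleftrightarrow> 1 \<le> n \<and> (\<forall>i\<le>n. g i \<in> carrier G) \<and>
     (\<forall>i\<in>{1..n}. \<exists>t\<in>T. g i = g (i - 1) \<otimes>\<^bsub>G\<^esub> t) \<and> g n = g 0"

text \<open>Diagonal triangulations of the polygon with consecutive vertices i, i+1, ..., j,
  whose side (i,j) is already present (as an arc or as a chord drawn before).
  The set D is the set of chords (i',j') with i' < j'.  The polygon is split by the
  triangle (i,k,j) containing the side (i,j); sides of that triangle that are not arcs
  between neighbouring points are chords.\<close>
inductive poly_tri :: "nat \<Rightarrow> nat \<Rightarrow> (nat \<times> nat) set \<Rightarrow> bool" where
  small: "j \<le> Suc i \<Longrightarrow> poly_tri i j {}"
| split: "i < k \<Longrightarrow> k < j \<Longrightarrow> poly_tri i k D1 \<Longrightarrow> poly_tri k j D2 \<Longrightarrow>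
     poly_tri i j (D1 \<union> D2 \<union> (if Suc i < k then {(i, k)} else {})
                          \<union> (if Suc k < j then {(k, j)} else {}))"

text \<open>A triangulation of a circle with distinguished points p_1, ..., p_n (counterclockwise):
  chord sets D with poly_tri 1 n D.  (For n \<le> 3 this forces D = {}.)\<close>
definition circle_triangulation :: "nat \<Rightarrow> (nat \<times> nat) set \<Rightarrow> bool" where
  "circle_triangulation n D \<longleftrightarrow> poly_tri 1 n D"

definition has_k_triangulation ::
  "('a, 'b) monoid_scheme \<Rightarrow> 'a set \<Rightarrow> (nat \<Rightarrow> 'a) \<Rightarrow> nat \<Rightarrow> nat \<Rightarrow> bool" where
  "has_k_triangulation G T g n k \<longleftrightarrow>
     (\<exists>D. circle_triangulation n D \<and> (\<forall>(i, j)\<in>D. word_dist G T (g i) (g j) \<le> k))"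

definition Delta :: "('a, 'b) monoid_scheme \<Rightarrow> 'a set \<Rightarrow> nat \<Rightarrow> nat" where
  "Delta G T n = (LEAST k. \<forall>g m. m \<le> n \<longrightarrow> cayley_cycle G T g m \<longrightarrow> has_k_triangulation G T g m k)"

end

theory Submission
  imports Defs
begin


definition wd :: "('a, 'b) monoid_scheme \<Rightarrow> 'a set \<Rightarrow> 'a \<Rightarrow> nat" where
  "wd G T h = (LEAST n. \<exists>w. set w \<subseteq> T \<and> length w = n \<and> word_prod G w = h)"

lemma word_dist_wd: "word_dist G T g g' = wd G T (inv\<^bsub>G\<^esub> g \<otimes>\<^bsub>G\<^esub> g')"
  by (simp add: word_dist_def wd_def)

lemma wd_le: "set w \<subseteq> T \<Longrightarrow> word_prod G w = h \<Longrightarrow> wd G T h \<le> length w"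
  unfolding wd_def by (rule Least_le) auto

lemma wd_ex: "set w \<subseteq> T \<Longrightarrow> word_prod G w = h \<Longrightarrow>
   \<exists>v. set v \<subseteq> T \<and> length v = wd G T h \<and> word_prod G v = h"
  unfolding wd_def by (rule LeastI_ex) auto

lemma wp_Cons: "word_prod G (t#w) = t \<otimes>\<^bsub>G\<^esub> word_prod G w"
  by (simp add: word_prod_def)

lemma wp_Nil: "word_prod G [] = \<one>\<^bsub>G\<^esub>"
  by (simp add: word_prod_def)

context group begin

lemma wp_carrier: "set w \<subseteq> carrier G \<Longrightarrow> word_prod G w \<in> carrier G"
  by (induct w) (auto simp: wp_Cons wp_Nil)

lemma wp_append: "set a \<subseteq> carrier G \<Longrightarrow> set b \<subseteq> carrier G \<Longrightarrow>
   word_prod G (a@b) = word_prod G a \<otimes> word_prod G b"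
  by (induct a) (auto simp: wp_Cons wp_Nil m_assoc wp_carrier)

lemma gen_word:
  assumes "T \<subseteq> carrier G" "\<forall>s\<in>T. inv s \<in> T" "h \<in> generate G T"
  shows "\<exists>w. set w \<subseteq> T \<and> word_prod G w = h"
  using assms(3)
proof (induct h rule: generate.induct)
  case one
  then show ?case by (rule exI[of _ "[]"]) (simp add: wp_Nil)
next
  case (incl h)
  then show ?case using assms by (intro exI[of _ "[h]"]) (auto simp: wp_Cons wp_Nil)
next
  case (inv h)
  then show ?case using assms by (intro exI[of _ "[inv h]"]) (auto simp: wp_Cons wp_Nil)
next
  case (eng h1 h2)
  then obtain w1 w2 where "set w1 \<subseteq> T" "word_prod G w1 = h1" "set w2 \<subseteq> T" "word_prod G w2 = h2"
    by blast
  then show ?case using assms(1) by (intro exI[of _ "w1@w2"]) (auto simp: wp_append)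
qed

lemma wd_sub:
  assumes "T \<subseteq> carrier G" "\<exists>w. set w \<subseteq> T \<and> word_prod G w = a" "\<exists>w. set w \<subseteq> T \<and> word_prod G w = b"
  shows "wd G T (a \<otimes> b) \<le> wd G T a + wd G T b"
proof -
  obtain w1 where w1: "set w1 \<subseteq> T" "length w1 = wd G T a" "word_prod G w1 = a"
    using assms(2) wd_ex by metis
  obtain w2 where w2: "set w2 \<subseteq> T" "length w2 = wd G T b" "word_prod G w2 = b"
    using assms(3) wd_ex by metis
  have "word_prod G (w1@w2) = a \<otimes> b" using w1 w2 assms(1) by (simp add: wp_append)
  then have "wd G T (a \<otimes> b) \<le> length (w1@w2)" using w1 w2 by (intro wd_le) auto
  then show ?thesis using w1 w2 by simp
qed

lemma wp_inv_rev: "set w \<subseteq> carrier G \<Longrightarrow> word_prod G (map (\<lambda>x. inv x) (rev w)) = inv (word_prod G w)"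
proof (induct w)
  case Nil then show ?case by (simp add: wp_Nil)
next
  case (Cons a w)
  have c: "set (map (\<lambda>x. inv x) (rev w)) \<subseteq> carrier G" using Cons.prems by auto
  have "word_prod G (map (\<lambda>x. inv x) (rev (a#w))) = word_prod G (map (\<lambda>x. inv x) (rev w)) \<otimes> inv a"
    using c Cons.prems by (simp add: wp_append wp_Cons wp_Nil)
  also have "\<dots> = inv (word_prod G w) \<otimes> inv a" using Cons by simp
  also have "\<dots> = inv (a \<otimes> word_prod G w)" using Cons.prems by (simp add: inv_mult_group wp_carrier)
  finally show ?case by (simp add: wp_Cons)
qed

lemma wd_inv:
  assumes "T \<subseteq> carrier G" "\<forall>s\<in>T. inv s \<in> T" "\<exists>w. set w \<subseteq> T \<and> word_prod G w = a"
  shows "wd G T (inv a) \<le> wd G T a"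
proof -
  obtain w1 where w1: "set w1 \<subseteq> T" "length w1 = wd G T a" "word_prod G w1 = a"
    using assms(3) wd_ex by metis
  have "word_prod G (map (\<lambda>x. inv x) (rev w1)) = inv a" using w1 assms(1) wp_inv_rev by auto
  then have "wd G T (inv a) \<le> length (map (\<lambda>x. inv x) (rev w1))" using w1 assms(2) by (intro wd_le) auto
  then show ?thesis using w1 by simp
qed

end



lemma poly_tri_range: "poly_tri i j D \<Longrightarrow> (a,b) \<in> D \<Longrightarrow> i \<le> a \<and> a < b \<and> b \<le> j"
  by (induct rule: poly_tri.induct) (auto split: if_splits)

lemma poly_tri_ex: "\<exists>D. poly_tri i j D"
proof (induct "j - i" arbitrary: i)
  case 0
  then show ?case using poly_tri.small by (metis diff_is_0_eq le_SucI)
next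
  case (Suc x)
  show ?case
  proof (cases "j \<le> Suc i")
    case True then show ?thesis using poly_tri.small by blast
  next
    case False
    have "x = j - Suc i" using Suc(2) by arith
    then obtain D2 where "poly_tri (Suc i) j D2" using Suc(1)[of "Suc i"] by auto
    moreover have "poly_tri i (Suc i) {}" by (rule poly_tri.small) simp
    ultimately show ?thesis using False poly_tri.split[of i "Suc i" j "{}" D2] by auto
  qed
qed

lemma proj:
  assumes "poly_tri i j D'"
  shows "i \<le> j \<Longrightarrow> 1 \<le> i \<Longrightarrow> j \<le> m \<Longrightarrow> D' \<subseteq> C \<Longrightarrow>
    (\<forall>a b. 1 \<le> a \<longrightarrow> a \<le> b \<longrightarrow> b \<le> m \<longrightarrow> \<phi> a \<le> \<phi> b) \<Longrightarrow>
    (\<forall>a. 1 \<le> a \<longrightarrow> a < m \<longrightarrow> \<phi> (Suc a) \<le> Suc (\<phi> a)) \<Longrightarrow>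
    (\<forall>a b. 1 \<le> a \<longrightarrow> a < b \<longrightarrow> b \<le> m \<longrightarrow> ((a,b) \<in> C \<or> b = Suc a) \<longrightarrow> \<phi> a < \<phi> b \<longrightarrow> Q (\<phi> a) (\<phi> b)) \<Longrightarrow>
    \<exists>D. poly_tri (\<phi> i) (\<phi> j) D \<and> (\<forall>(a,b)\<in>D. Q a b)"
  using assms
proof (induct rule: poly_tri.induct)
  case (small j i)
  then have "j = i \<or> j = Suc i" by auto
  then have "\<phi> j \<le> Suc (\<phi> i)"
    using small.prems(2,3,6) by auto
  then show ?case using poly_tri.small by blast
next
  case (split i k j D1 D2)
  have s1: "D1 \<subseteq> C" "D2 \<subseteq> C" using split.prems(4) by auto
  obtain E1 where E1: "poly_tri (\<phi> i) (\<phi> k) E1" "\<forall>(a,b)\<in>E1. Q a b"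
  proof -
    have "i \<le> k" "k \<le> m" using split.hyps(1,2) split.prems(3) by auto
    then show ?thesis using split.hyps(4)[OF _ split.prems(2) _ s1(1) split.prems(5,6,7)] that by blast
  qed
  obtain E2 where E2: "poly_tri (\<phi> k) (\<phi> j) E2" "\<forall>(a,b)\<in>E2. Q a b"
  proof -
    have "k \<le> j" "1 \<le> k" using split.hyps(1,2) split.prems(2) by auto
    then show ?thesis using split.hyps(6)[OF _ _ split.prems(3) s1(2) split.prems(5,6,7)] that by blast
  qed
  have m1: "\<phi> i \<le> \<phi> k" "\<phi> k \<le> \<phi> j" using split.prems(2,3,5) split.hyps(1,2) by auto
  show ?case
  proof (cases "\<phi> i = \<phi> k")
    case True then show ?thesis using E2 by auto
  next
    case f1: False
    show ?thesis
    proof (cases "\<phi> k = \<phi> j")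
      case True then show ?thesis using E1 by auto
    next
      case False
      have lt: "\<phi> i < \<phi> k" "\<phi> k < \<phi> j" using m1 f1 False by auto
      have c1: "(i,k) \<in> C \<or> k = Suc i" using split.prems(4) split.hyps(1) by (auto split: if_splits)
      have c2: "(k,j) \<in> C \<or> j = Suc k" using split.prems(4) split.hyps(2) by (auto split: if_splits)
      have q1: "Q (\<phi> i) (\<phi> k)" using split.prems(7)[rule_format, of i k] split.hyps(1,2) split.prems(2,3) c1 lt(1) by simp
      have q2: "Q (\<phi> k) (\<phi> j)" using split.prems(7)[rule_format, of k j] split.hyps(1,2) split.prems(2,3) c2 lt(2) by simp
      let ?E = "E1 \<union> E2 \<union> (if Suc (\<phi> i) < \<phi> k then {(\<phi> i, \<phi> k)} else {})
                          \<union> (if Suc (\<phi> k) < \<phi> j then {(\<phi> k, \<phi> j)} else {})"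
      have "\<forall>(a,b)\<in>?E. Q a b" using E1(2) E2(2) q1 q2 by (auto split: if_splits)
      then show ?thesis
        using poly_tri.split[OF lt(1) lt(2) E1(1) E2(1)] by blast
    qed
  qed
qed

context group begin

lemma cycle_path:
  assumes "cayley_cycle G T g n" "T \<subseteq> carrier G"
  shows "i \<le> j \<Longrightarrow> j \<le> n \<Longrightarrow> \<exists>w. set w \<subseteq> T \<and> length w = j - i \<and> word_prod G w = inv (g i) \<otimes> g j"
proof (induct j)
  case 0
  then show ?case using assms unfolding cayley_cycle_def by (intro exI[of _ "[]"]) (auto simp: wp_Nil)
next
  case (Suc j)
  show ?case
  proof (cases "i = Suc j")
    case True
    then show ?thesis using assms Suc.prems unfolding cayley_cycle_def by (intro exI[of _ "[]"]) (auto simp: wp_Nil)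
  next
    case False
    then obtain w where w: "set w \<subseteq> T" "length w = j - i" "word_prod G w = inv (g i) \<otimes> g j"
      using Suc by auto
    obtain t where t: "t \<in> T" "g (Suc j) = g j \<otimes> t" using assms(1) Suc.prems unfolding cayley_cycle_def
      by (metis atLeastAtMost_iff diff_Suc_1 le_add1 plus_1_eq_Suc)
    have gc: "g i \<in> carrier G" "g j \<in> carrier G" using assms(1) Suc.prems unfolding cayley_cycle_def by auto
    have tc: "t \<in> carrier G" using t assms(2) by auto
    have "word_prod G (w @ [t]) = word_prod G w \<otimes> t"
      using w tc assms(2) by (simp add: wp_append wp_Cons wp_Nil)
    also have "\<dots> = inv (g i) \<otimes> g (Suc j)" using w t gc tc by (simp add: m_assoc)
    finally have "word_prod G (w @ [t]) = inv (g i) \<otimes> g (Suc j)" .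
    then show ?thesis using w t False Suc.prems by (intro exI[of _ "w@[t]"]) auto
  qed
qed

end



context group begin

lemma gen_word':
  assumes "T \<subseteq> carrier G" "\<forall>s\<in>T. inv s \<in> T" "generate G T = carrier G" "h \<in> carrier G"
  shows "\<exists>w. set w \<subseteq> T \<and> word_prod G w = h"
  using gen_word assms by auto

lemma delta_exists:
  assumes "T \<subseteq> carrier G"
  shows "\<exists>k. \<forall>g m. m \<le> n \<longrightarrow> cayley_cycle G T g m \<longrightarrow> has_k_triangulation G T g m k"
proof (intro exI allI impI)
  fix g m assume mn: "m \<le> n" and cy: "cayley_cycle G T g m"
  obtain D where D: "poly_tri 1 m D" using poly_tri_ex by blast
  have "\<forall>(a, b)\<in>D. word_dist G T (g a) (g b) \<le> n"
  proof (clarify)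
    fix a b assume ab: "(a,b) \<in> D"
    then have r: "1 \<le> a" "a < b" "b \<le> m" using poly_tri_range[OF D] by auto
    obtain w where w: "set w \<subseteq> T" "length w = b - a" "word_prod G w = inv (g a) \<otimes> g b"
      using cycle_path[OF cy assms, of a b] r by auto
    have "wd G T (inv (g a) \<otimes> g b) \<le> b - a" using wd_le[OF w(1) w(3)] w(2) by simp
    then show "word_dist G T (g a) (g b) \<le> n" using r mn by (simp add: word_dist_wd)
  qed
  then show "has_k_triangulation G T g m n" using D
    unfolding has_k_triangulation_def circle_triangulation_def by blast
qed

lemma delta_prop:
  assumes "T \<subseteq> carrier G" "m \<le> n" "cayley_cycle G T g m"
  shows "has_k_triangulation G T g m (Delta G T n)"
proof -
  have "\<forall>g m. m \<le> n \<longrightarrow> cayley_cycle G T g m \<longrightarrow> has_k_triangulation G T g m (Delta G T n)"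
    unfolding Delta_def by (rule LeastI_ex) (rule delta_exists[OF assms(1)])
  then show ?thesis using assms by blast
qed

lemma wd_compare:
  assumes S: "S \<subseteq> carrier G" "\<forall>s\<in>S. inv s \<in> S" "generate G S = carrier G"
    and S': "finite S'" "S' \<subseteq> carrier G" "\<forall>s\<in>S'. inv s \<in> S'" "generate G S' = carrier G"
    and h: "h \<in> carrier G"
  shows "wd G S h \<le> Max (insert 0 (wd G S ` S')) * wd G S' h"
proof -
  let ?M = "Max (insert 0 (wd G S ` S'))"
  have main: "set w \<subseteq> S' \<Longrightarrow> wd G S (word_prod G w) \<le> ?M * length w" for w
  proof (induct w)
    case Nil
    have "wd G S (word_prod G []) \<le> length ([]::'a list)" by (rule wd_le) auto
    then show ?case by simp
  next
    case (Cons t w)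
    have tc: "t \<in> carrier G" "set w \<subseteq> carrier G" using Cons.prems S'(2) by auto
    have "wd G S (word_prod G (t#w)) = wd G S (t \<otimes> word_prod G w)" by (simp add: wp_Cons)
    also have "\<dots> \<le> wd G S t + wd G S (word_prod G w)"
      by (rule wd_sub[OF S(1) gen_word'[OF S tc(1)] gen_word'[OF S wp_carrier[OF tc(2)]]])
    also have "\<dots> \<le> ?M + ?M * length w"
    proof (rule add_mono)
      show "wd G S t \<le> ?M" using Cons.prems S'(1) by (intro Max_ge) auto
      show "wd G S (word_prod G w) \<le> ?M * length w" using Cons by auto
    qed
    finally show ?case by simp
  qed
  obtain w where "set w \<subseteq> S'" "length w = wd G S' h" "word_prod G w = h"
    using wd_ex gen_word'[OF S'(2,3,4) h] by metis
  then show ?thesis using main by metis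
qed

end



context group begin

lemma main_tri:
  assumes S: "S \<subseteq> carrier G" "\<forall>s\<in>S. inv s \<in> S" "generate G S = carrier G"
    and S': "S' \<subseteq> carrier G" "\<forall>s\<in>S'. inv s \<in> S'" "generate G S' = carrier G"
    and W: "\<forall>s\<in>S. set (W s) \<subseteq> S' \<and> W s \<noteq> [] \<and> word_prod G (W s) = s \<and> length (W s) \<le> L"
    and Mc: "\<forall>h\<in>carrier G. wd G S h \<le> M * wd G S' h"
    and cy: "cayley_cycle G S x N"
    and Dp: "\<forall>g m. m \<le> L*N \<longrightarrow> cayley_cycle G S' g m \<longrightarrow> has_k_triangulation G S' g m \<Delta>"
  shows "has_k_triangulation G S x N (M*(2*L+1+\<Delta>))"
proof -
  have xc: "\<And>i. i \<le> N \<Longrightarrow> x i \<in> carrier G" and N1: "1 \<le> N" and xN: "x N = x 0"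
    using cy unfolding cayley_cycle_def by auto
  define t where "t i = (SOME s. s \<in> S \<and> x i = x (i-1) \<otimes> s)" for i
  have t: "t i \<in> S \<and> x i = x (i-1) \<otimes> t i" if "1 \<le> i" "i \<le> N" for i
  proof -
    have "\<exists>s. s \<in> S \<and> x i = x (i-1) \<otimes> s" using cy that unfolding cayley_cycle_def by auto
    then show ?thesis unfolding t_def by (rule someI_ex)
  qed
  define cw where "cw a = concat (map (\<lambda>i. W (t i)) [1..<Suc a])" for a
  define pos where "pos a = length (cw a)" for a
  define ws where "ws = cw N"
  define m where "m = pos N"
  have cw0: "cw 0 = []" by (simp add: cw_def)
  have cw_Suc: "cw (Suc a) = cw a @ W (t (Suc a))" for a by (simp add: cw_def)
  have cw_set: "a \<le> N \<Longrightarrow> set (cw a) \<subseteq> S'" for a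
  proof (induct a)
    case 0 then show ?case by (simp add: cw0)
  next
    case (Suc a) then show ?case using W t[of "Suc a"] by (auto simp: cw_Suc)
  qed
  have pos0: "pos 0 = 0" by (simp add: pos_def cw0)
  have pos_Suc: "pos a < pos (Suc a) \<and> pos (Suc a) \<le> pos a + L" if "a < N" for a
  proof -
    have "t (Suc a) \<in> S" using t[of "Suc a"] that by auto
    then have "W (t (Suc a)) \<noteq> []" "length (W (t (Suc a))) \<le> L" using W by auto
    then show ?thesis by (simp add: pos_def cw_Suc)
  qed
  have pos_mono: "a \<le> b \<Longrightarrow> b \<le> N \<Longrightarrow> pos a + (b - a) \<le> pos b" for a b
  proof (induct b)
    case 0 then show ?case by simp
  next
    case (Suc b)
    show ?case
    proof (cases "a = Suc b")
      case True then show ?thesis by simp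
    next
      case False
      then have "pos a + (b - a) \<le> pos b" using Suc by auto
      moreover have "pos b < pos (Suc b)" using pos_Suc[of b] Suc.prems by auto
      ultimately show ?thesis using False Suc.prems by auto
    qed
  qed
  have pos_L: "a \<le> N \<Longrightarrow> pos a \<le> L * a" for a
  proof (induct a)
    case 0 then show ?case by (simp add: pos0)
  next
    case (Suc a) then show ?case using pos_Suc[of a] by auto
  qed
  have cw_pre: "a \<le> b \<Longrightarrow> \<exists>r. cw b = cw a @ r" for a b
  proof (induct b)
    case 0 then show ?case by auto
  next
    case (Suc b)
    show ?case
    proof (cases "a = Suc b")
      case True then show ?thesis by auto
    next
      case False then obtain r where "cw b = cw a @ r" using Suc by auto
      then show ?thesis by (auto simp: cw_Suc)
    qed
  qed
  have cw_take: "a \<le> N \<Longrightarrow> take (pos a) ws = cw a" for a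
    using cw_pre[of a N] unfolding ws_def pos_def by auto
  have ws_S': "set ws \<subseteq> S'" using cw_set[of N] by (simp add: ws_def)
  have ws_c: "set ws \<subseteq> carrier G" using ws_S' S'(1) by auto
  have cw_prod: "a \<le> N \<Longrightarrow> word_prod G (cw a) = inv (x 0) \<otimes> x a" for a
  proof (induct a)
    case 0 then show ?case using xc[of 0] by (simp add: cw0 wp_Nil)
  next
    case (Suc a)
    have tS: "t (Suc a) \<in> S" and xs: "x (Suc a) = x a \<otimes> t (Suc a)" using t[of "Suc a"] Suc.prems by auto
    have tc: "t (Suc a) \<in> carrier G" using tS S(1) by auto
    have c1: "set (cw a) \<subseteq> carrier G" using cw_set[of a] Suc.prems S'(1) by auto
    have c2: "set (W (t (Suc a))) \<subseteq> carrier G" using W tS S'(1) by auto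
    have "word_prod G (cw (Suc a)) = word_prod G (cw a) \<otimes> word_prod G (W (t (Suc a)))"
      by (simp add: cw_Suc wp_append c1 c2)
    also have "\<dots> = (inv (x 0) \<otimes> x a) \<otimes> t (Suc a)" using Suc tS W by simp
    also have "\<dots> = inv (x 0) \<otimes> x (Suc a)" using xs xc[of 0] xc[of a] tc Suc.prems by (simp add: m_assoc)
    finally show ?case .
  qed
  define y where "y j = x 0 \<otimes> word_prod G (take j ws)" for j
  have yc: "y j \<in> carrier G" for j
  proof -
    have "set (take j ws) \<subseteq> carrier G" using ws_c by (meson order_trans set_take_subset)
    then have "word_prod G (take j ws) \<in> carrier G" by (rule wp_carrier)
    then show ?thesis unfolding y_def using xc[of 0] by simp
  qed
  have ypos: "a \<le> N \<Longrightarrow> y (pos a) = x a" for a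
  proof -
    assume a: "a \<le> N"
    have "y (pos a) = x 0 \<otimes> (inv (x 0) \<otimes> x a)" unfolding y_def using cw_take[OF a] cw_prod[OF a] by simp
    also have "\<dots> = x a" using xc[of 0] xc[OF a] by (simp add: m_assoc[symmetric])
    finally show ?thesis .
  qed
  have mlen: "m = length ws" by (simp add: m_def pos_def ws_def)
  have m1: "1 \<le> m"
  proof -
    have "pos 0 < pos 1" using pos_Suc[of 0] N1 by simp
    moreover have "pos 1 \<le> pos N" using pos_mono[of 1 N] N1 by simp
    ultimately show ?thesis unfolding m_def by simp
  qed
  have ycy: "cayley_cycle G S' y m"
    unfolding cayley_cycle_def
  proof (intro conjI ballI allI impI)
    show "1 \<le> m" by (rule m1)
    show "y i \<in> carrier G" for i by (rule yc)
    show "y m = y 0" using ypos[of N] xN xc[of 0] unfolding m_def by (simp add: y_def wp_Nil)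
  next
    fix j assume j: "j \<in> {1..m}"
    then have jl: "j - 1 < length ws" and jj: "j = Suc (j - 1)" using mlen by auto
    have wsc: "ws ! (j-1) \<in> carrier G" using ws_c jl by auto
    have tc: "set (take (j-1) ws) \<subseteq> carrier G" using ws_c by (meson order_trans set_take_subset)
    have "take j ws = take (j-1) ws @ [ws ! (j-1)]" using jl jj take_Suc_conv_app_nth by metis
    then have "y j = y (j-1) \<otimes> ws ! (j-1)"
      unfolding y_def using wsc tc xc[of 0] wp_carrier[OF tc]
      by (simp add: wp_append wp_Cons wp_Nil m_assoc)
    moreover have "ws ! (j-1) \<in> S'" using ws_S' jl by auto
    ultimately show "\<exists>t\<in>S'. y j = y (j - 1) \<otimes> t" by blast
  qed
  have mL: "m \<le> L*N" using pos_L[of N] unfolding m_def by simp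
  obtain D' where D': "poly_tri 1 m D'" "\<forall>(a,b)\<in>D'. word_dist G S' (y a) (y b) \<le> \<Delta>"
    using Dp mL ycy unfolding has_k_triangulation_def circle_triangulation_def by blast
  define \<phi> where "\<phi> j = (LEAST a. j \<le> pos a)" for j
  have F0: "j \<le> pos (\<phi> j) \<and> \<phi> j \<le> N \<and> 1 \<le> \<phi> j \<and> pos (\<phi> j - 1) < j" if "1 \<le> j" "j \<le> m" for j
  proof -
    have a: "j \<le> pos (\<phi> j)" unfolding \<phi>_def by (rule LeastI[of _ N]) (use that m_def in auto)
    have b: "\<phi> j \<le> N" unfolding \<phi>_def by (rule Least_le) (use that m_def in auto)
    have c: "1 \<le> \<phi> j" using a pos0 that by (cases "\<phi> j") auto
    have "\<not> j \<le> pos (\<phi> j - 1)" unfolding \<phi>_def by (rule not_less_Least) (use c \<phi>_def in auto)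
    then show ?thesis using a b c by auto
  qed
  have F1: "\<forall>a b. 1 \<le> a \<longrightarrow> a \<le> b \<longrightarrow> b \<le> m \<longrightarrow> \<phi> a \<le> \<phi> b"
  proof (intro allI impI)
    fix a b assume "1 \<le> a" "a \<le> b" "b \<le> m"
    then have "a \<le> pos (\<phi> b)" using F0[of b] by auto
    then show "\<phi> a \<le> \<phi> b" unfolding \<phi>_def[of a] by (rule Least_le)
  qed
  have F2: "\<forall>a. 1 \<le> a \<longrightarrow> a < m \<longrightarrow> \<phi> (Suc a) \<le> Suc (\<phi> a)"
  proof (intro allI impI)
    fix a assume a: "1 \<le> a" "a < m"
    show "\<phi> (Suc a) \<le> Suc (\<phi> a)"
    proof (cases "\<phi> a < N")
      case True
      then have "Suc a \<le> pos (Suc (\<phi> a))" using pos_Suc[of "\<phi> a"] F0[of a] a by auto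
      then show ?thesis unfolding \<phi>_def[of "Suc a"] by (rule Least_le)
    next
      case False
      then have "\<phi> a = N" using F0[of a] a by auto
      then have "Suc a \<le> pos (\<phi> a)" using a m_def by auto
      then have "\<phi> (Suc a) \<le> \<phi> a" unfolding \<phi>_def[of "Suc a"] by (rule Least_le)
      then show ?thesis by simp
    qed
  qed
  have phi1: "\<phi> 1 = 1"
  proof -
    have "1 \<le> pos 1" using pos_Suc[of 0] N1 pos0 by auto
    then have "\<phi> 1 \<le> 1" unfolding \<phi>_def by (rule Least_le)
    then show ?thesis using F0[of 1] m1 by auto
  qed
  have phim: "\<phi> m = N"
  proof (rule ccontr)
    assume "\<phi> m \<noteq> N"
    then have "\<phi> m < N" using F0[of m] m1 by auto
    then have "pos (\<phi> m) < m" using pos_mono[of "\<phi> m" N] unfolding m_def by auto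
    then show False using F0[of m] m1 by auto
  qed
  have exS': "\<exists>w. set w \<subseteq> S' \<and> word_prod G w = h" if "h \<in> carrier G" for h
    by (rule gen_word'[OF S' that])
  have F4: "wd G S' (inv (y j) \<otimes> x (\<phi> j)) \<le> L \<and> wd G S' (inv (x (\<phi> j)) \<otimes> y j) \<le> L"
    if j: "1 \<le> j" "j \<le> m" for j
  proof -
    have f: "j \<le> pos (\<phi> j)" "\<phi> j \<le> N" "1 \<le> \<phi> j" "pos (\<phi> j - 1) < j" using F0[OF j] by auto
    have "pos (\<phi> j) \<le> pos (\<phi> j - 1) + L" using pos_Suc[of "\<phi> j - 1"] f by auto
    then have pl: "pos (\<phi> j) - j \<le> L" using f by auto
    have "pos (\<phi> j) \<le> m" using pos_mono[of "\<phi> j" N] f unfolding m_def by auto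
    then obtain w where w: "set w \<subseteq> S'" "length w = pos (\<phi> j) - j" "word_prod G w = inv (y j) \<otimes> y (pos (\<phi> j))"
      using cycle_path[OF ycy S'(1), of j "pos (\<phi> j)"] f by auto
    have yx: "y (pos (\<phi> j)) = x (\<phi> j)" using ypos f by auto
    have d1: "wd G S' (inv (y j) \<otimes> x (\<phi> j)) \<le> L" using wd_le[OF w(1) w(3)] w(2) pl yx by simp
    have xcj: "x (\<phi> j) \<in> carrier G" using xc f by auto
    have "inv (inv (y j) \<otimes> x (\<phi> j)) = inv (x (\<phi> j)) \<otimes> y j"
      using xcj yc by (simp add: inv_mult_group)
    moreover have "wd G S' (inv (inv (y j) \<otimes> x (\<phi> j))) \<le> wd G S' (inv (y j) \<otimes> x (\<phi> j))"
      using wd_inv[OF S'(1,2) exS'] xcj yc by auto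
    ultimately show ?thesis using d1 by auto
  qed
  have Qp: "\<forall>a b. 1 \<le> a \<longrightarrow> a < b \<longrightarrow> b \<le> m \<longrightarrow> ((a,b) \<in> D' \<or> b = Suc a) \<longrightarrow> \<phi> a < \<phi> b \<longrightarrow>
      word_dist G S (x (\<phi> a)) (x (\<phi> b)) \<le> M*(2*L+1+\<Delta>)"
  proof (intro allI impI)
    fix a b assume ab: "1 \<le> a" "a < b" "b \<le> m" "(a,b) \<in> D' \<or> b = Suc a"
    have d1: "wd G S' (inv (y a) \<otimes> y b) \<le> \<Delta> + 1"
    proof (cases "(a,b) \<in> D'")
      case True then show ?thesis using D'(2) by (auto simp: word_dist_wd)
    next
      case False
      then have "b = Suc a" using ab by auto
      then obtain w where w: "set w \<subseteq> S'" "length w = 1" "word_prod G w = inv (y a) \<otimes> y b"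
        using cycle_path[OF ycy S'(1), of a b] ab by auto
      then show ?thesis using wd_le[OF w(1) w(3)] by simp
    qed
    have fa: "\<phi> a \<le> N" "\<phi> b \<le> N" using F0 ab by auto
    have xa: "x (\<phi> a) \<in> carrier G" and xb: "x (\<phi> b) \<in> carrier G" using xc fa by auto
    have ya: "y a \<in> carrier G" and yb: "y b \<in> carrier G" by (rule yc)+
    have eq: "inv (x (\<phi> a)) \<otimes> x (\<phi> b) =
       (inv (x (\<phi> a)) \<otimes> y a) \<otimes> ((inv (y a) \<otimes> y b) \<otimes> (inv (y b) \<otimes> x (\<phi> b)))"
    proof -
      have cn: "u \<otimes> (inv u \<otimes> z) = z" if "u \<in> carrier G" "z \<in> carrier G" for u z
        using that by (simp add: m_assoc[symmetric])
      show ?thesis using xa xb ya yb by (simp add: m_assoc cn)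
    qed
    have "wd G S' ((inv (y a) \<otimes> y b) \<otimes> (inv (y b) \<otimes> x (\<phi> b))) \<le>
        wd G S' (inv (y a) \<otimes> y b) + wd G S' (inv (y b) \<otimes> x (\<phi> b))"
      using xa xb ya yb by (intro wd_sub[OF S'(1)] exS') auto
    also have "\<dots> \<le> (\<Delta> + 1) + L" using d1 F4[of b] ab by auto
    finally have e1: "wd G S' ((inv (y a) \<otimes> y b) \<otimes> (inv (y b) \<otimes> x (\<phi> b))) \<le> \<Delta> + 1 + L" .
    have "wd G S' (inv (x (\<phi> a)) \<otimes> x (\<phi> b)) \<le>
       wd G S' (inv (x (\<phi> a)) \<otimes> y a) + wd G S' ((inv (y a) \<otimes> y b) \<otimes> (inv (y b) \<otimes> x (\<phi> b)))"
      unfolding eq using xa xb ya yb by (intro wd_sub[OF S'(1)] exS') auto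
    also have "\<dots> \<le> L + (\<Delta> + 1 + L)" using e1 F4[of a] ab by auto
    finally have e2: "wd G S' (inv (x (\<phi> a)) \<otimes> x (\<phi> b)) \<le> 2*L+1+\<Delta>" by simp
    have "wd G S (inv (x (\<phi> a)) \<otimes> x (\<phi> b)) \<le> M * wd G S' (inv (x (\<phi> a)) \<otimes> x (\<phi> b))"
      using Mc xa xb by auto
    also have "\<dots> \<le> M*(2*L+1+\<Delta>)" using e2 by (rule mult_le_mono2)
    finally show "word_dist G S (x (\<phi> a)) (x (\<phi> b)) \<le> M*(2*L+1+\<Delta>)" by (simp add: word_dist_wd)
  qed
  obtain D where D: "poly_tri (\<phi> 1) (\<phi> m) D" "\<forall>(a,b)\<in>D. word_dist G S (x a) (x b) \<le> M*(2*L+1+\<Delta>)"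
    using proj[OF D'(1) m1 order_refl order_refl subset_refl F1 F2,
        of "\<lambda>a b. word_dist G S (x a) (x b) \<le> M*(2*L+1+\<Delta>)"] Qp by blast
  then show ?thesis unfolding has_k_triangulation_def circle_triangulation_def using phi1 phim by auto
qed

end



context group begin

lemma lemma3p1_aux:
  fixes S S' :: "'a set"
  assumes "True"
    and "finite S" "S \<subseteq> carrier G" "generate G S = carrier G" "\<forall>s\<in>S. inv s \<in> S"
    and "finite S'" "S' \<subseteq> carrier G" "generate G S' = carrier G" "\<forall>s\<in>S'. inv\<^bsub>G\<^esub> s \<in> S'"
  shows "\<exists>K::nat. \<forall>n\<ge>1. Delta G S n \<le> K * Delta G S' (K * n) + K"
proof -
  show ?thesis
  proof (cases "S' = {}")
    case True
    have c1: "h = \<one>" if "h \<in> carrier G" for h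
    proof -
      have "h \<in> generate G {}" using that assms(8) True by simp
      then show ?thesis by (induct h rule: generate.induct) auto
    qed
    have "Delta G S n \<le> 0" for n
      unfolding Delta_def
    proof (rule Least_le, intro allI impI)
      fix g m assume "m \<le> n" and cy: "cayley_cycle G S g m"
      obtain D where D: "poly_tri 1 m D" using poly_tri_ex by blast
      have aux: "word_dist G S (g a) (g b) \<le> 0" if "(a,b) \<in> D" for a b
      proof -
        note that
        then have r: "a \<le> m" "b \<le> m" using poly_tri_range[OF D] by force+
        then have "inv (g a) \<otimes> g b \<in> carrier G" using cy unfolding cayley_cycle_def by auto
        then have e: "inv (g a) \<otimes> g b = word_prod G []" using c1 by (simp add: wp_Nil)
        have "wd G S (inv (g a) \<otimes> g b) \<le> length ([]::'a list)" using wd_le[of "[]" S G "inv (g a) \<otimes> g b"] e by simp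
        then show "word_dist G S (g a) (g b) \<le> 0" by (simp add: word_dist_wd)
      qed
      have "\<forall>(a, b)\<in>D. word_dist G S (g a) (g b) \<le> 0" using aux by blast
      then show "has_k_triangulation G S g m 0" using D
        unfolding has_k_triangulation_def circle_triangulation_def by blast
    qed
    then show ?thesis by (intro exI[of _ 0]) auto
  next
    case False
    then obtain t0 where t0: "t0 \<in> S'" by auto
    have t0c: "t0 \<in> carrier G" "inv t0 \<in> S'" using t0 assms(7,9) by auto
    have Wex: "\<exists>w. set w \<subseteq> S' \<and> w \<noteq> [] \<and> word_prod G w = s" if s: "s \<in> S" for s
    proof -
      obtain w where w: "set w \<subseteq> S'" "word_prod G w = s"
        using gen_word'[OF assms(7,9,8)] s assms(3) by blast
      show ?thesis
      proof (cases "w = []")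
        case False then show ?thesis using w by blast
      next
        case True
        then have "s = \<one>" using w by (simp add: wp_Nil)
        moreover have "word_prod G [t0, inv t0] = \<one>" using t0c by (simp add: wp_Cons wp_Nil)
        ultimately show ?thesis using t0 t0c by (intro exI[of _ "[t0, inv t0]"]) auto
      qed
    qed
    define W where "W s = (SOME w. set w \<subseteq> S' \<and> w \<noteq> [] \<and> word_prod G w = s)" for s
    define L where "L = Max (insert 0 (length ` W ` S))"
    define M where "M = Max (insert 0 (wd G S ` S'))"
    define K where "K = M * (2*L+1) + L"
    have W: "\<forall>s\<in>S. set (W s) \<subseteq> S' \<and> W s \<noteq> [] \<and> word_prod G (W s) = s \<and> length (W s) \<le> L"
    proof
      fix s assume s: "s \<in> S"
      have "set (W s) \<subseteq> S' \<and> W s \<noteq> [] \<and> word_prod G (W s) = s"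
        unfolding W_def by (rule someI_ex) (rule Wex[OF s])
      moreover have "length (W s) \<le> L" unfolding L_def using s assms(2) by (intro Max_ge) auto
      ultimately show "set (W s) \<subseteq> S' \<and> W s \<noteq> [] \<and> word_prod G (W s) = s \<and> length (W s) \<le> L"
        by blast
    qed
    have Mc: "\<forall>h\<in>carrier G. wd G S h \<le> M * wd G S' h"
      unfolding M_def using wd_compare[OF assms(3,5,4) assms(6,7,9,8)] by blast
    show ?thesis
    proof (intro exI[of _ K] allI impI)
      fix n :: nat assume n: "1 \<le> n"
      let ?D = "Delta G S' (K * n)"
      have "Delta G S n \<le> M * (2*L+1+?D)"
        unfolding Delta_def[of G S n]
      proof (rule Least_le, intro allI impI)
        fix g N assume Nn: "N \<le> n" and cy: "cayley_cycle G S g N"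
        have Dp: "\<forall>g m. m \<le> L*N \<longrightarrow> cayley_cycle G S' g m \<longrightarrow> has_k_triangulation G S' g m ?D"
        proof (intro allI impI)
          fix g' m assume "m \<le> L*N" "cayley_cycle G S' g' m"
          moreover have "L*N \<le> K*n" unfolding K_def using Nn by (simp add: add_mult_distrib mult_le_mono trans_le_add2)
          ultimately show "has_k_triangulation G S' g' m ?D" using delta_prop[OF assms(7)] by auto
        qed
        show "has_k_triangulation G S g N (M * (2*L+1+?D))"
          using main_tri[OF assms(3,5,4) assms(7,9,8) W Mc cy] Dp by blast
      qed
      also have "\<dots> = M * (2*L+1) + M * ?D" by (simp add: add_mult_distrib2)
      also have "\<dots> \<le> K + K * ?D" unfolding K_def by (intro add_mono mult_le_mono1) auto
      finally show "Delta G S n \<le> K * ?D + K" by simp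
    qed
  qed
qed

end

theorem lemma3p1:
  fixes G :: "('a, 'b) monoid_scheme" and S S' :: "'a set"
  assumes "group G"
    and "finite S" "S \<subseteq> carrier G" "generate G S = carrier G" "\<forall>s\<in>S. inv\<^bsub>G\<^esub> s \<in> S"
    and "finite S'" "S' \<subseteq> carrier G" "generate G S' = carrier G" "\<forall>s\<in>S'. inv\<^bsub>G\<^esub> s \<in> S'"
  shows "\<exists>K::nat. \<forall>n\<ge>1. Delta G S n \<le> K * Delta G S' (K * n) + K"
  using group.lemma3p1_aux[OF assms(1) TrueI assms(2-9)] .


end
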